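(* Let $PV_3$ be the group with generators $\lambda_{12},\lambda_{21},\lambda_{13},\lambda_{31},\lambda_{23},\lambda_{32}$ and the six defining relations $$\lambda_{ki}\lambda_{kj}\lambda_{ij}=\lambda_{ij}\lambda_{kj}\lambda_{ki}\qquad\text{for all } \{i,j,k\}=\{1,2,3\}$$ (i.e. for every ordering $(k,i,j)$ of three distinct indices). Then there exists a group $G_3$ such that $PV_3\cong G_3\ast\mathbb{Z}$.
   Context: $PV_3$ is the pure virtual braid group on three strands (the kernel of the canonical epimorphism from the virtual braid group $VB_3$ onto the symmetric group $\Sigma_3$); the presentation above is a known presentation of it and may be taken as its definition. $\ast$ denotes the free product of groups. *)

theory Defs
  imports "HOL-Algebra.Algebra"
begin

text \<open>Words over an alphabet: a letter is a pair (generator, exponent sign),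
  True meaning the generator itself, False its inverse.\<close>

type_synonym 'a word = "('a \<times> bool) list"

inductive pres_eq :: "'a word set \<Rightarrow> 'a word \<Rightarrow> 'a word \<Rightarrow> bool" for R where
  pres_refl: "pres_eq R w w"
| pres_sym: "pres_eq R u v \<Longrightarrow> pres_eq R v u"
| pres_trans: "pres_eq R u v \<Longrightarrow> pres_eq R v w \<Longrightarrow> pres_eq R u w"
| pres_cancel: "pres_eq R (u @ [(a, b), (a, \<not> b)] @ v) (u @ v)"
| pres_rel: "r \<in> R \<Longrightarrow> pres_eq R (u @ r @ v) (u @ v)"

definition word_class :: "'a word set \<Rightarrow> 'a word \<Rightarrow> 'a word set" where
  "word_class R w = {w'. pres_eq R w w'}"

definition presented_group :: "'a set \<Rightarrow> 'a word set \<Rightarrow> ('a word set) monoid" where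
  "presented_group S R =
     \<lparr> carrier = word_class R ` lists (S \<times> UNIV),
       monoid.mult = (\<lambda>A B. {w. \<exists>a\<in>A. \<exists>b\<in>B. pres_eq R (a @ b) w}),
       one = word_class R [] \<rparr>"

text \<open>The free product of two groups G and H, given by the standard presentation
  with generators the disjoint union of the carriers and relators the
  multiplication tables of G and H.\<close>

definition free_product :: "('a, 'c) monoid_scheme \<Rightarrow> ('b, 'd) monoid_scheme
    \<Rightarrow> (('a + 'b) word set) monoid" (infixl \<open>\<star>\<close> 65) where
  "free_product G H =
     presented_group (Inl ` carrier G \<union> Inr ` carrier H)
       ({[(Inl g, True), (Inl h, True), (Inl (g \<otimes>\<^bsub>G\<^esub> h), False)] | g h.
            g \<in> carrier G \<and> h \<in> carrier G}
        \<union> {[(Inr g, True), (Inr h, True), (Inr (g \<otimes>\<^bsub>H\<^esub> h), False)] | g h.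
            g \<in> carrier H \<and> h \<in> carrier H})"

text \<open>The pure virtual braid group PV_3: generators lambda_ij, i \<noteq> j in {1,2,3},
  encoded as the pair (i,j), with the six relations
  lambda_ki lambda_kj lambda_ij = lambda_ij lambda_kj lambda_ki for distinct i,j,k,
  written as relators lambda_ki lambda_kj lambda_ij lambda_ki^-1 lambda_kj^-1 lambda_ij^-1.\<close>

definition PV3_gens :: "(nat \<times> nat) set" where
  "PV3_gens = {(i, j). i \<in> {1, 2, 3} \<and> j \<in> {1, 2, 3} \<and> i \<noteq> j}"

definition PV3_rels :: "(nat \<times> nat) word set" where
  "PV3_rels = {[((k, i), True), ((k, j), True), ((i, j), True),
                ((k, i), False), ((k, j), False), ((i, j), False)] | i j k.
               {i, j, k} = {1, 2, 3} \<and> i \<noteq> j \<and> j \<noteq> k \<and> i \<noteq> k}"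

definition PV3 :: "((nat \<times> nat) word set) monoid" where
  "PV3 = presented_group PV3_gens PV3_rels"

end

theory Submission
  imports Defs
begin


lemma pres_eq_ctx: "pres_eq R u v \<Longrightarrow> pres_eq R (x @ u @ y) (x @ v @ y)"
proof (induction rule: pres_eq.induct)
  case (pres_refl w) then show ?case by (rule pres_eq.pres_refl)
next
  case (pres_sym u v) then show ?case by (metis pres_eq.pres_sym)
next
  case (pres_trans u v w) then show ?case by (metis pres_eq.pres_trans)
next
  case (pres_cancel u a b v)
  have "pres_eq R ((x@u) @ [(a,b),(a,\<not>b)] @ (v@y)) ((x@u) @ (v@y))" by (rule pres_eq.pres_cancel)
  then show ?case by simp
next
  case (pres_rel r u v)
  have "pres_eq R ((x@u) @ r @ (v@y)) ((x@u) @ (v@y))" by (rule pres_eq.pres_rel) fact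
  then show ?case by simp
qed

lemma pres_eq_app: "pres_eq R u u' \<Longrightarrow> pres_eq R v v' \<Longrightarrow> pres_eq R (u@v) (u'@v')"
  using pres_eq_ctx[of R u u' "[]" v] pres_eq_ctx[of R v v' u' "[]"]
  by (metis append_Nil append_Nil2 pres_eq.pres_trans)

definition winv :: "'a word \<Rightarrow> 'a word" where
  "winv w = rev (map (\<lambda>(a,b). (a, \<not> b)) w)"

lemma winv_simps [simp]: "winv [] = []" "winv ((a,b)#w) = winv w @ [(a, \<not>b)]"
  by (auto simp: winv_def)

lemma winv_winv [simp]: "winv (winv w) = w"
  by (induction w) (auto simp: winv_def rev_map)

lemma winv_lists: "w \<in> lists (S \<times> UNIV) \<Longrightarrow> winv w \<in> lists (S \<times> UNIV)"
  by (auto simp: winv_def)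

lemma pres_inv_r: "pres_eq R (w @ winv w) []"
proof (induction w)
  case Nil then show ?case by (simp add: pres_eq.pres_refl)
next
  case (Cons x w)
  obtain a b where x: "x = (a,b)" by force
  have "pres_eq R ([(a,b)] @ (w @ winv w) @ [(a,\<not>b)]) ([(a,b)] @ [] @ [(a,\<not>b)])"
    by (rule pres_eq_ctx) (rule Cons)
  moreover have "pres_eq R ([] @ [(a,b),(a,\<not>b)] @ []) ([] @ [])" by (rule pres_eq.pres_cancel)
  ultimately show ?case using x by (auto intro: pres_eq.pres_trans)
qed

lemma pres_inv_l: "pres_eq R (winv w @ w) []"
  using pres_inv_r[of R "winv w"] by simp

lemma word_class_eq: "word_class R u = word_class R v \<longleftrightarrow> pres_eq R u v"
proof
  assume h: "word_class R u = word_class R v"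
  have "v \<in> word_class R v" by (simp add: word_class_def pres_eq.pres_refl)
  then have "v \<in> word_class R u" using h by simp
  then show "pres_eq R u v" by (simp add: word_class_def)
next
  assume "pres_eq R u v"
  then show "word_class R u = word_class R v"
    unfolding word_class_def by (auto intro: pres_eq.pres_trans pres_eq.pres_sym)
qed

lemma mult_class: "word_class R u \<otimes>\<^bsub>presented_group S R\<^esub> word_class R v = word_class R (u @ v)"
  unfolding presented_group_def word_class_def
  by (auto intro: pres_eq.pres_trans pres_eq_app pres_eq.pres_refl)

lemma carrier_pg: "carrier (presented_group S R) = word_class R ` lists (S \<times> UNIV)"
  by (simp add: presented_group_def)

lemma one_pg: "\<one>\<^bsub>presented_group S R\<^esub> = word_class R []"
  by (simp add: presented_group_def)

lemma group_pg: "group (presented_group S R)"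
proof (rule groupI)
  fix x y assume "x \<in> carrier (presented_group S R)" "y \<in> carrier (presented_group S R)"
  then obtain u v where "u \<in> lists (S \<times> UNIV)" "v \<in> lists (S \<times> UNIV)"
     "x = word_class R u" "y = word_class R v" by (auto simp: carrier_pg)
  then show "x \<otimes>\<^bsub>presented_group S R\<^esub> y \<in> carrier (presented_group S R)"
    by (auto simp: mult_class carrier_pg)
next
  show "\<one>\<^bsub>presented_group S R\<^esub> \<in> carrier (presented_group S R)"
    by (auto simp: one_pg carrier_pg)
next
  fix x y z assume "x \<in> carrier (presented_group S R)" "y \<in> carrier (presented_group S R)"
     "z \<in> carrier (presented_group S R)"
  then obtain u v t where "x = word_class R u" "y = word_class R v" "z = word_class R t"
    by (auto simp: carrier_pg)
  then show "x \<otimes>\<^bsub>presented_group S R\<^esub> y \<otimes>\<^bsub>presented_group S R\<^esub> z =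
      x \<otimes>\<^bsub>presented_group S R\<^esub> (y \<otimes>\<^bsub>presented_group S R\<^esub> z)"
    by (simp add: mult_class)
next
  fix x assume "x \<in> carrier (presented_group S R)"
  then obtain u where "x = word_class R u" by (auto simp: carrier_pg)
  then show "\<one>\<^bsub>presented_group S R\<^esub> \<otimes>\<^bsub>presented_group S R\<^esub> x = x"
    by (simp add: mult_class one_pg)
next
  fix x assume "x \<in> carrier (presented_group S R)"
  then obtain u where u: "u \<in> lists (S \<times> UNIV)" "x = word_class R u" by (auto simp: carrier_pg)
  show "\<exists>y\<in>carrier (presented_group S R). y \<otimes>\<^bsub>presented_group S R\<^esub> x = \<one>\<^bsub>presented_group S R\<^esub>"
  proof
    show "word_class R (winv u) \<in> carrier (presented_group S R)"
      using u by (auto simp: carrier_pg winv_lists)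
    show "word_class R (winv u) \<otimes>\<^bsub>presented_group S R\<^esub> x = \<one>\<^bsub>presented_group S R\<^esub>"
      using u by (simp add: mult_class one_pg word_class_eq pres_inv_l)
  qed
qed

fun ev :: "('b, 'c) monoid_scheme \<Rightarrow> ('a \<Rightarrow> 'b) \<Rightarrow> 'a word \<Rightarrow> 'b" where
  "ev H f [] = \<one>\<^bsub>H\<^esub>"
| "ev H f ((a,b)#w) = (if b then f a else inv\<^bsub>H\<^esub> (f a)) \<otimes>\<^bsub>H\<^esub> ev H f w"

definition lift :: "('g, 'c) monoid_scheme \<Rightarrow> ('x \<Rightarrow> 'g) \<Rightarrow> 'x word set \<Rightarrow> 'x word set \<Rightarrow> 'g" where
  "lift H f R A = ev H f (SOME w. A = word_class R w)"

context group
begin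

lemma ev_carrier: "(\<And>a. f a \<in> carrier G) \<Longrightarrow> ev G f w \<in> carrier G"
  by (induction w) auto

lemma ev_append: "(\<And>a. f a \<in> carrier G) \<Longrightarrow> ev G f (u @ v) = ev G f u \<otimes> ev G f v"
  by (induction u) (auto simp: m_assoc ev_carrier)

lemma ev_pres:
  assumes f: "\<And>a. f a \<in> carrier G" and R: "\<And>r. r \<in> R \<Longrightarrow> ev G f r = \<one>"
  shows "pres_eq R u v \<Longrightarrow> ev G f u = ev G f v"
proof (induction rule: pres_eq.induct)
  case (pres_cancel u a b v)
  have "ev G f ((a,b)#(a,\<not>b)#v) = ev G f v"
    by (cases b) (simp_all add: f ev_carrier[OF f] m_assoc[symmetric])
  then show ?case using f by (simp add: ev_append ev_carrier del: ev.simps)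
next
  case (pres_rel r u v)
  then show ?case using f R by (simp add: ev_append ev_carrier del: ev.simps)
qed auto


lemma lift_class:
  assumes f: "\<And>a. f a \<in> carrier G" and R: "\<And>r. r \<in> R \<Longrightarrow> ev G f r = \<one>"
  shows "lift G f R (word_class R w) = ev G f w"
proof -
  have "word_class R w = word_class R (SOME w'. word_class R w = word_class R w')"
    by (rule someI) (rule refl)
  then show ?thesis unfolding lift_def
    by (metis ev_pres[OF f R] word_class_eq pres_eq.pres_sym)
qed

lemma lift_hom:
  assumes f: "\<And>a. f a \<in> carrier G" and R: "\<And>r. r \<in> R \<Longrightarrow> ev G f r = \<one>"
  shows "lift G f R \<in> hom (presented_group S R) G"
proof (rule homI)
  fix x assume "x \<in> carrier (presented_group S R)"
  then obtain u where "x = word_class R u" by (auto simp: carrier_pg)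
  then show "lift G f R x \<in> carrier G" by (simp add: lift_class[OF f R] ev_carrier[OF f])
next
  fix x y assume "x \<in> carrier (presented_group S R)" "y \<in> carrier (presented_group S R)"
  then obtain u v where "x = word_class R u" "y = word_class R v" by (auto simp: carrier_pg)
  then show "lift G f R (x \<otimes>\<^bsub>presented_group S R\<^esub> y) = lift G f R x \<otimes> lift G f R y"
    by (simp add: mult_class lift_class[OF f R] ev_append[OF f])
qed

end

lemma hom_ev:
  assumes "group G" "group H" "h \<in> hom G H" "\<And>a. f a \<in> carrier G"
  shows "h (ev G f w) = ev H (h \<circ> f) w"
proof (induction w)
  case Nil then show ?case using assms by (simp add: hom_one)
next
  case (Cons x w)
  obtain a b where x: "x = (a,b)" by force
  have ih: "h (ev G f ((a,b)#w)) = h (if b then f a else inv\<^bsub>G\<^esub> (f a)) \<otimes>\<^bsub>H\<^esub> h (ev G f w)"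
    using assms by (cases b) (auto simp: hom_mult group.ev_carrier[OF assms(1)] group.inv_closed[OF assms(1)])
  show ?case using ih Cons x assms
    by (auto simp: group_hom.hom_inv group_hom_def group_hom_axioms_def)
qed

lemma ev_cong: "(\<And>a b. (a,b) \<in> set w \<Longrightarrow> f a = g a) \<Longrightarrow> ev H f w = ev H g w"
proof (induction w)
  case (Cons x w)
  obtain a b where x: "x = (a,b)" by force
  have "f a = g a" using Cons.prems x by auto
  moreover have "ev H f w = ev H g w" using Cons by auto
  ultimately show ?case by (simp add: x)
qed simp

lemma class_inv:
  assumes "a \<in> S"
  shows "inv\<^bsub>presented_group S R\<^esub> word_class R [(a,True)] = word_class R [(a,False)]"
proof (rule group.inv_equality[OF group_pg])
  have "pres_eq R ([] @ [(a,False),(a,\<not>False)] @ []) ([] @ [])" by (rule pres_eq.pres_cancel)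
  then show "word_class R [(a, False)] \<otimes>\<^bsub>presented_group S R\<^esub> word_class R [(a, True)] = \<one>\<^bsub>presented_group S R\<^esub>"
    by (simp add: mult_class one_pg word_class_eq)
qed (use assms in \<open>auto simp: carrier_pg\<close>)

lemma ev_gens:
  "w \<in> lists (S \<times> UNIV) \<Longrightarrow> ev (presented_group S R) (\<lambda>s. word_class R [(s,True)]) w = word_class R w"
proof (induction w)
  case Nil then show ?case by (simp add: one_pg)
next
  case (Cons x w)
  obtain a b where x: "x = (a,b)" by force
  then show ?case using Cons by (auto simp: class_inv mult_class)
qed



declare One_nat_def [simp del]

context group
begin
lemma cancel1: "x \<in> carrier G \<Longrightarrow> y \<in> carrier G \<Longrightarrow> inv x \<otimes> (x \<otimes> y) = y"
  by (simp add: m_assoc[symmetric])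
lemma cancel2: "x \<in> carrier G \<Longrightarrow> y \<in> carrier G \<Longrightarrow> x \<otimes> (inv x \<otimes> y) = y"
  by (simp add: m_assoc[symmetric])

lemma rel_from:
  assumes c: "x \<in> carrier G" "y \<in> carrier G" "z \<in> carrier G"
    and e: "x \<otimes> (y \<otimes> (z \<otimes> (inv x \<otimes> (inv y \<otimes> (inv z \<otimes> \<one>))))) = \<one>"
  shows "x \<otimes> (y \<otimes> z) = z \<otimes> (y \<otimes> x)"
proof -
  let ?L = "x \<otimes> (y \<otimes> z)" and ?M = "inv x \<otimes> (inv y \<otimes> inv z)"
  have LM: "?L \<otimes> ?M = \<one>" using e c by (simp add: m_assoc)
  have "?L = ?L \<otimes> (?M \<otimes> inv ?M)" using c by simp
  also have "\<dots> = (?L \<otimes> ?M) \<otimes> inv ?M" using c by (simp add: m_assoc)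
  also have "\<dots> = inv ?M" using LM c by simp
  also have "\<dots> = z \<otimes> (y \<otimes> x)" using c by (simp add: inv_mult_group m_assoc)
  finally show ?thesis .
qed

lemma rel_to:
  assumes c: "x \<in> carrier G" "y \<in> carrier G" "z \<in> carrier G"
    and e: "x \<otimes> (y \<otimes> z) = z \<otimes> (y \<otimes> x)"
  shows "x \<otimes> (y \<otimes> (z \<otimes> (inv x \<otimes> (inv y \<otimes> (inv z \<otimes> \<one>))))) = \<one>"
proof -
  have "x \<otimes> (y \<otimes> (z \<otimes> (inv x \<otimes> (inv y \<otimes> (inv z \<otimes> \<one>))))) = (x \<otimes> (y \<otimes> z)) \<otimes> inv (z \<otimes> (y \<otimes> x))"
    using c by (simp add: inv_mult_group m_assoc)
  also have "\<dots> = \<one>" using c e by simp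
  finally show ?thesis .
qed
end

definition gP :: "nat \<times> nat \<Rightarrow> (nat \<times> nat) word set" where
  "gP x = word_class PV3_rels [(x, True)]"

lemma group_PV3: "group PV3" unfolding PV3_def by (rule group_pg)

interpretation P: group PV3 by (rule group_PV3)

lemma gens_in [simp]: "(1,2) \<in> PV3_gens" "(2,1) \<in> PV3_gens" "(1,3) \<in> PV3_gens"
   "(3,1) \<in> PV3_gens" "(2,3) \<in> PV3_gens" "(3,2) \<in> PV3_gens"
  by (auto simp: PV3_gens_def)

lemma gP_carrier: "x \<in> PV3_gens \<Longrightarrow> gP x \<in> carrier PV3"
  by (auto simp: gP_def PV3_def carrier_pg)

lemma gP_c [simp]: "gP (1,2) \<in> carrier PV3" "gP (2,1) \<in> carrier PV3" "gP (1,3) \<in> carrier PV3"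
   "gP (3,1) \<in> carrier PV3" "gP (2,3) \<in> carrier PV3" "gP (3,2) \<in> carrier PV3"
  by (auto intro: gP_carrier)

lemma PV3_rel:
  assumes "{i, j, k} = {1, 2, 3}" "i \<noteq> j" "j \<noteq> k" "i \<noteq> k"
  shows "gP (k,i) \<otimes>\<^bsub>PV3\<^esub> (gP (k,j) \<otimes>\<^bsub>PV3\<^esub> gP (i,j)) = gP (i,j) \<otimes>\<^bsub>PV3\<^esub> (gP (k,j) \<otimes>\<^bsub>PV3\<^esub> gP (k,i))"
proof -
  have ijk: "i \<in> {1,2,3}" "j \<in> {1,2,3}" "k \<in> {1,2,3}" using assms(1) by blast+
  let ?r = "[((k, i), True), ((k, j), True), ((i, j), True),
                ((k, i), False), ((k, j), False), ((i, j), False)]"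
  have r: "?r \<in> PV3_rels" unfolding PV3_rels_def using assms by blast
  have rl: "?r \<in> lists (PV3_gens \<times> UNIV)" using ijk assms by (auto simp: PV3_gens_def)
  have "word_class PV3_rels ?r = word_class PV3_rels []"
    using pres_eq.pres_rel[OF r, of "[]" "[]"] by (simp add: word_class_eq)
  then have "ev PV3 gP ?r = \<one>\<^bsub>PV3\<^esub>"
    using ev_gens[OF rl, of PV3_rels] by (simp add: gP_def[abs_def] PV3_def one_pg)
  then show ?thesis using ijk assms
    by (intro P.rel_from) (auto intro!: gP_carrier simp: PV3_gens_def)
qed

lemma r1: "gP (1,2) \<otimes>\<^bsub>PV3\<^esub> (gP (1,3) \<otimes>\<^bsub>PV3\<^esub> gP (2,3)) = gP (2,3) \<otimes>\<^bsub>PV3\<^esub> (gP (1,3) \<otimes>\<^bsub>PV3\<^esub> gP (1,2))"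
  by (rule PV3_rel[of 2 3 1]) auto
lemma r2: "gP (1,3) \<otimes>\<^bsub>PV3\<^esub> (gP (1,2) \<otimes>\<^bsub>PV3\<^esub> gP (3,2)) = gP (3,2) \<otimes>\<^bsub>PV3\<^esub> (gP (1,2) \<otimes>\<^bsub>PV3\<^esub> gP (1,3))"
  by (rule PV3_rel[of 3 2 1]) auto
lemma r3: "gP (2,1) \<otimes>\<^bsub>PV3\<^esub> (gP (2,3) \<otimes>\<^bsub>PV3\<^esub> gP (1,3)) = gP (1,3) \<otimes>\<^bsub>PV3\<^esub> (gP (2,3) \<otimes>\<^bsub>PV3\<^esub> gP (2,1))"
  by (rule PV3_rel[of 1 3 2]) auto
lemma r4: "gP (2,3) \<otimes>\<^bsub>PV3\<^esub> (gP (2,1) \<otimes>\<^bsub>PV3\<^esub> gP (3,1)) = gP (3,1) \<otimes>\<^bsub>PV3\<^esub> (gP (2,1) \<otimes>\<^bsub>PV3\<^esub> gP (2,3))"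
  by (rule PV3_rel[of 3 1 2]) auto
lemma r5: "gP (3,1) \<otimes>\<^bsub>PV3\<^esub> (gP (3,2) \<otimes>\<^bsub>PV3\<^esub> gP (1,2)) = gP (1,2) \<otimes>\<^bsub>PV3\<^esub> (gP (3,2) \<otimes>\<^bsub>PV3\<^esub> gP (3,1))"
  by (rule PV3_rel[of 1 2 3]) auto
lemma r6: "gP (3,2) \<otimes>\<^bsub>PV3\<^esub> (gP (3,1) \<otimes>\<^bsub>PV3\<^esub> gP (2,1)) = gP (2,1) \<otimes>\<^bsub>PV3\<^esub> (gP (3,1) \<otimes>\<^bsub>PV3\<^esub> gP (3,2))"
  by (rule PV3_rel[of 2 1 3]) auto

definition "ha = inv\<^bsub>PV3\<^esub> gP (2,3) \<otimes>\<^bsub>PV3\<^esub> gP (1,2)"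
definition "hA = gP (2,1) \<otimes>\<^bsub>PV3\<^esub> gP (2,3)"
definition "hb = gP (1,3) \<otimes>\<^bsub>PV3\<^esub> gP (2,3)"
definition "hB = inv\<^bsub>PV3\<^esub> gP (2,3) \<otimes>\<^bsub>PV3\<^esub> gP (3,1)"
definition "hC = gP (3,2) \<otimes>\<^bsub>PV3\<^esub> gP (2,3)"

lemma h_c [simp]: "ha \<in> carrier PV3" "hA \<in> carrier PV3" "hb \<in> carrier PV3" "hB \<in> carrier PV3" "hC \<in> carrier PV3"
  by (simp_all add: ha_def hA_def hb_def hB_def hC_def)

lemmas Psimps = P.m_assoc P.cancel1 P.cancel2

lemma I1: "ha \<otimes>\<^bsub>PV3\<^esub> hb = hb \<otimes>\<^bsub>PV3\<^esub> ha"
  by (simp add: ha_def hb_def Psimps r1)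
lemma I2: "hb \<otimes>\<^bsub>PV3\<^esub> (ha \<otimes>\<^bsub>PV3\<^esub> hC) = hC \<otimes>\<^bsub>PV3\<^esub> (ha \<otimes>\<^bsub>PV3\<^esub> hb)"
proof -
  have "gP (1,3) \<otimes>\<^bsub>PV3\<^esub> (gP (1,2) \<otimes>\<^bsub>PV3\<^esub> (gP (3,2) \<otimes>\<^bsub>PV3\<^esub> gP (2,3))) = gP (3,2) \<otimes>\<^bsub>PV3\<^esub> (gP (1,2) \<otimes>\<^bsub>PV3\<^esub> (gP (1,3) \<otimes>\<^bsub>PV3\<^esub> gP (2,3)))"
    using r2 by (simp add: P.m_assoc[symmetric])
  then show ?thesis by (simp add: ha_def hb_def hC_def Psimps)
qed
lemma I3: "hA \<otimes>\<^bsub>PV3\<^esub> hb = hb \<otimes>\<^bsub>PV3\<^esub> hA"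
proof -
  have "gP (2,1) \<otimes>\<^bsub>PV3\<^esub> (gP (2,3) \<otimes>\<^bsub>PV3\<^esub> (gP (1,3) \<otimes>\<^bsub>PV3\<^esub> gP (2,3))) = gP (1,3) \<otimes>\<^bsub>PV3\<^esub> (gP (2,3) \<otimes>\<^bsub>PV3\<^esub> (gP (2,1) \<otimes>\<^bsub>PV3\<^esub> gP (2,3)))"
    using r3 by (simp add: P.m_assoc[symmetric])
  then show ?thesis by (simp add: hA_def hb_def Psimps)
qed
lemma I4: "hA \<otimes>\<^bsub>PV3\<^esub> hB = hB \<otimes>\<^bsub>PV3\<^esub> hA"
proof -
  have "inv\<^bsub>PV3\<^esub> gP (2,3) \<otimes>\<^bsub>PV3\<^esub> (gP (2,3) \<otimes>\<^bsub>PV3\<^esub> (gP (2,1) \<otimes>\<^bsub>PV3\<^esub> gP (3,1))) = inv\<^bsub>PV3\<^esub> gP (2,3) \<otimes>\<^bsub>PV3\<^esub> (gP (3,1) \<otimes>\<^bsub>PV3\<^esub> (gP (2,1) \<otimes>\<^bsub>PV3\<^esub> gP (2,3)))"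
    using r4 by simp
  then show ?thesis by (simp add: hA_def hB_def Psimps)
qed
lemma I5: "hB \<otimes>\<^bsub>PV3\<^esub> (hC \<otimes>\<^bsub>PV3\<^esub> ha) = ha \<otimes>\<^bsub>PV3\<^esub> (hC \<otimes>\<^bsub>PV3\<^esub> hB)"
proof -
  have "inv\<^bsub>PV3\<^esub> gP (2,3) \<otimes>\<^bsub>PV3\<^esub> (gP (3,1) \<otimes>\<^bsub>PV3\<^esub> (gP (3,2) \<otimes>\<^bsub>PV3\<^esub> gP (1,2))) = inv\<^bsub>PV3\<^esub> gP (2,3) \<otimes>\<^bsub>PV3\<^esub> (gP (1,2) \<otimes>\<^bsub>PV3\<^esub> (gP (3,2) \<otimes>\<^bsub>PV3\<^esub> gP (3,1)))"
    using r5 by simp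
  then show ?thesis by (simp add: ha_def hB_def hC_def Psimps)
qed
lemma I6: "hC \<otimes>\<^bsub>PV3\<^esub> (hB \<otimes>\<^bsub>PV3\<^esub> hA) = hA \<otimes>\<^bsub>PV3\<^esub> (hB \<otimes>\<^bsub>PV3\<^esub> hC)"
proof -
  have "gP (3,2) \<otimes>\<^bsub>PV3\<^esub> (gP (3,1) \<otimes>\<^bsub>PV3\<^esub> (gP (2,1) \<otimes>\<^bsub>PV3\<^esub> gP (2,3))) = gP (2,1) \<otimes>\<^bsub>PV3\<^esub> (gP (3,1) \<otimes>\<^bsub>PV3\<^esub> (gP (3,2) \<otimes>\<^bsub>PV3\<^esub> gP (2,3)))"
    using r6 by (simp add: P.m_assoc[symmetric])
  then show ?thesis by (simp add: hA_def hB_def hC_def Psimps)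
qed


definition "T3 = {ha, hA, hb, hB, hC}"
definition "H3 = generate PV3 T3"
definition "G3 = PV3\<lparr>carrier := H3\<rparr>"

lemma T3_sub: "T3 \<subseteq> carrier PV3" by (simp add: T3_def)
lemma subH3: "subgroup H3 PV3" unfolding H3_def by (rule P.generate_is_subgroup[OF T3_sub])
lemma group_G3: "group G3" unfolding G3_def by (rule P.subgroup_imp_group[OF subH3])
lemma h_H [simp]: "ha \<in> H3" "hA \<in> H3" "hb \<in> H3" "hB \<in> H3" "hC \<in> H3"
  unfolding H3_def T3_def by (auto intro: generate.incl)
lemma H3_mult [simp]: "x \<in> H3 \<Longrightarrow> y \<in> H3 \<Longrightarrow> x \<otimes>\<^bsub>PV3\<^esub> y \<in> H3"
  using subH3 by (rule subgroup.m_closed)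
lemma H3_carr: "x \<in> H3 \<Longrightarrow> x \<in> carrier PV3"
  by (rule subgroup.mem_carrier[OF subH3])

definition "SF = Inl ` H3 \<union> Inr ` (UNIV :: int set)"
definition "RF = {[(Inl g, True), (Inl h, True), (Inl (g \<otimes>\<^bsub>PV3\<^esub> h), False)] | g h. g \<in> H3 \<and> h \<in> H3}
     \<union> {[(Inr g, True), (Inr h, True), (Inr (g + h), False)] | (g::int) h. True}"
definition "FP = presented_group SF RF"

lemma F_eq: "G3 \<star> integer_group = FP"
proof -
  have "carrier G3 = H3" "\<And>x y. x \<otimes>\<^bsub>G3\<^esub> y = x \<otimes>\<^bsub>PV3\<^esub> y" by (simp_all add: G3_def)
  then show ?thesis unfolding free_product_def FP_def SF_def RF_def by simp
qed

lemma group_FP: "group FP" unfolding FP_def by (rule group_pg)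
interpretation F: group FP by (rule group_FP)

definition iota :: "(nat \<times> nat) word set \<Rightarrow> ((nat \<times> nat) word set + int) word set" where
  "iota g = word_class RF [(Inl g, True)]"
definition zeta :: "int \<Rightarrow> ((nat \<times> nat) word set + int) word set" where
  "zeta n = word_class RF [(Inr n, True)]"

lemma iota_c [simp]: "g \<in> H3 \<Longrightarrow> iota g \<in> carrier FP"
  unfolding iota_def FP_def carrier_pg by (rule imageI) (simp add: SF_def)
lemma zeta_c [simp]: "zeta n \<in> carrier FP"
  unfolding zeta_def FP_def carrier_pg by (rule imageI) (simp add: SF_def)

lemma iota_mult: assumes "g \<in> H3" "h \<in> H3"
  shows "iota g \<otimes>\<^bsub>FP\<^esub> iota h = iota (g \<otimes>\<^bsub>PV3\<^esub> h)"
proof -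
  let ?x = "Inl (g \<otimes>\<^bsub>PV3\<^esub> h)"
  have r: "[(Inl g, True), (Inl h, True), (?x, False)] \<in> RF" using assms by (auto simp: RF_def)
  have 1: "pres_eq RF ([(Inl g, True), (Inl h, True)] @ [(?x, False), (?x, \<not>False)] @ [])
       ([(Inl g, True), (Inl h, True)] @ [])" by (rule pres_eq.pres_cancel)
  have 2: "pres_eq RF ([] @ [(Inl g, True), (Inl h, True), (?x, False)] @ [(?x, True)]) ([] @ [(?x, True)])"
    by (rule pres_eq.pres_rel[OF r])
  have "pres_eq RF [(Inl g, True), (Inl h, True)] [(?x, True)]"
    using 1 2 by simp (meson pres_eq.pres_sym pres_eq.pres_trans)
  then show ?thesis by (simp add: iota_def FP_def mult_class word_class_eq)
qed

lemma zeta_mult: "zeta m \<otimes>\<^bsub>FP\<^esub> zeta n = zeta (m + n)"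
proof -
  let ?x = "Inr (m + n) :: (nat \<times> nat) word set + int"
  have r: "[(Inr m, True), (Inr n, True), (?x, False)] \<in> RF" by (auto simp: RF_def)
  have 1: "pres_eq RF ([(Inr m, True), (Inr n, True)] @ [(?x, False), (?x, \<not>False)] @ [])
       ([(Inr m, True), (Inr n, True)] @ [])" by (rule pres_eq.pres_cancel)
  have 2: "pres_eq RF ([] @ [(Inr m, True), (Inr n, True), (?x, False)] @ [(?x, True)]) ([] @ [(?x, True)])"
    by (rule pres_eq.pres_rel[OF r])
  have "pres_eq RF [(Inr m, True), (Inr n, True)] [(?x, True)]"
    using 1 2 by simp (meson pres_eq.pres_sym pres_eq.pres_trans)
  then show ?thesis by (simp add: zeta_def FP_def mult_class word_class_eq)
qed

lemma iota_hom: "iota \<in> hom G3 FP"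
  by (rule homI) (auto simp: G3_def iota_mult)
lemma zeta_hom: "zeta \<in> hom integer_group FP"
  by (rule homI) (auto simp: zeta_mult)

lemma gh_iota: "group_hom G3 FP iota"
  by (simp add: group_hom_def group_hom_axioms_def group_G3 group_FP iota_hom)
lemma gh_zeta: "group_hom integer_group FP zeta"
  by (simp add: group_hom_def group_hom_axioms_def group_FP zeta_hom)

lemma iota_one: "iota \<one>\<^bsub>PV3\<^esub> = \<one>\<^bsub>FP\<^esub>"
  using group_hom.hom_one[OF gh_iota] by (simp add: G3_def)
lemma iota_inv: "g \<in> H3 \<Longrightarrow> iota (inv\<^bsub>PV3\<^esub> g) = inv\<^bsub>FP\<^esub> iota g"
  using group_hom.hom_inv[OF gh_iota, of g] P.m_inv_consistent[OF subH3, of g] by (simp add: G3_def)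
lemma zeta_pow: "zeta n = zeta 1 [^]\<^bsub>FP\<^esub> n"
  using group_hom.hom_int_pow[OF gh_zeta, of 1 n] by simp

lemma iota_mult2: "g \<in> H3 \<Longrightarrow> h \<in> H3 \<Longrightarrow> w \<in> carrier FP \<Longrightarrow>
   iota g \<otimes>\<^bsub>FP\<^esub> (iota h \<otimes>\<^bsub>FP\<^esub> w) = iota (g \<otimes>\<^bsub>PV3\<^esub> h) \<otimes>\<^bsub>FP\<^esub> w"
  by (simp add: F.m_assoc[symmetric] iota_mult)

abbreviation "z \<equiv> zeta 1"

definition fphi :: "nat \<times> nat \<Rightarrow> ((nat \<times> nat) word set + int) word set" where
  "fphi x = (if x = (1,2) then z \<otimes>\<^bsub>FP\<^esub> iota ha
     else if x = (2,1) then iota hA \<otimes>\<^bsub>FP\<^esub> inv\<^bsub>FP\<^esub> z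
     else if x = (1,3) then iota hb \<otimes>\<^bsub>FP\<^esub> inv\<^bsub>FP\<^esub> z
     else if x = (3,1) then z \<otimes>\<^bsub>FP\<^esub> iota hB
     else if x = (2,3) then z
     else if x = (3,2) then iota hC \<otimes>\<^bsub>FP\<^esub> inv\<^bsub>FP\<^esub> z
     else \<one>\<^bsub>FP\<^esub>)"

lemma fphi_c: "fphi x \<in> carrier FP"
  by (simp add: fphi_def)

lemma fphi_vals: "fphi (1,2) = z \<otimes>\<^bsub>FP\<^esub> iota ha" "fphi (2,1) = iota hA \<otimes>\<^bsub>FP\<^esub> inv\<^bsub>FP\<^esub> z"
  "fphi (1,3) = iota hb \<otimes>\<^bsub>FP\<^esub> inv\<^bsub>FP\<^esub> z" "fphi (3,1) = z \<otimes>\<^bsub>FP\<^esub> iota hB"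
  "fphi (2,3) = z" "fphi (3,2) = iota hC \<otimes>\<^bsub>FP\<^esub> inv\<^bsub>FP\<^esub> z"
  by (simp_all add: fphi_def)

lemmas Fsimps = F.m_assoc F.cancel1 F.cancel2 iota_mult iota_mult2 fphi_vals H3_carr


lemma J1: "fphi (1,2) \<otimes>\<^bsub>FP\<^esub> (fphi (1,3) \<otimes>\<^bsub>FP\<^esub> fphi (2,3)) = fphi (2,3) \<otimes>\<^bsub>FP\<^esub> (fphi (1,3) \<otimes>\<^bsub>FP\<^esub> fphi (1,2))"
  by (simp add: Fsimps I1)
lemma J2: "fphi (1,3) \<otimes>\<^bsub>FP\<^esub> (fphi (1,2) \<otimes>\<^bsub>FP\<^esub> fphi (3,2)) = fphi (3,2) \<otimes>\<^bsub>FP\<^esub> (fphi (1,2) \<otimes>\<^bsub>FP\<^esub> fphi (1,3))"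
  by (simp add: Fsimps Psimps I2)
lemma J3: "fphi (2,1) \<otimes>\<^bsub>FP\<^esub> (fphi (2,3) \<otimes>\<^bsub>FP\<^esub> fphi (1,3)) = fphi (1,3) \<otimes>\<^bsub>FP\<^esub> (fphi (2,3) \<otimes>\<^bsub>FP\<^esub> fphi (2,1))"
  by (simp add: Fsimps I3)
lemma J4: "fphi (2,3) \<otimes>\<^bsub>FP\<^esub> (fphi (2,1) \<otimes>\<^bsub>FP\<^esub> fphi (3,1)) = fphi (3,1) \<otimes>\<^bsub>FP\<^esub> (fphi (2,1) \<otimes>\<^bsub>FP\<^esub> fphi (2,3))"
  by (simp add: Fsimps I4)
lemma J5: "fphi (3,1) \<otimes>\<^bsub>FP\<^esub> (fphi (3,2) \<otimes>\<^bsub>FP\<^esub> fphi (1,2)) = fphi (1,2) \<otimes>\<^bsub>FP\<^esub> (fphi (3,2) \<otimes>\<^bsub>FP\<^esub> fphi (3,1))"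
  by (simp add: Fsimps Psimps I5)
lemma J6: "fphi (3,2) \<otimes>\<^bsub>FP\<^esub> (fphi (3,1) \<otimes>\<^bsub>FP\<^esub> fphi (2,1)) = fphi (2,1) \<otimes>\<^bsub>FP\<^esub> (fphi (3,1) \<otimes>\<^bsub>FP\<^esub> fphi (3,2))"
  by (simp add: Fsimps Psimps I6)



lemma triples:
  assumes "{i, j, k} = {1, 2, 3::nat}" "i \<noteq> j" "j \<noteq> k" "i \<noteq> k"
  shows "(k,i,j) = (1,2,3) \<or> (k,i,j) = (1,3,2) \<or> (k,i,j) = (2,1,3) \<or> (k,i,j) = (2,3,1)
     \<or> (k,i,j) = (3,1,2) \<or> (k,i,j) = (3,2,1)"
proof -
  have "i \<in> {1,2,3}" "j \<in> {1,2,3}" "k \<in> {1,2,3}" using assms(1) by blast+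
  then show ?thesis using assms(2-4) by auto
qed

lemma fphi_rel:
  assumes "{i, j, k} = {1, 2, 3::nat}" "i \<noteq> j" "j \<noteq> k" "i \<noteq> k"
  shows "fphi (k,i) \<otimes>\<^bsub>FP\<^esub> (fphi (k,j) \<otimes>\<^bsub>FP\<^esub> fphi (i,j)) = fphi (i,j) \<otimes>\<^bsub>FP\<^esub> (fphi (k,j) \<otimes>\<^bsub>FP\<^esub> fphi (k,i))"
  using triples[OF assms] J1 J2 J3 J4 J5 J6 by auto

lemma fphi_R: "r \<in> PV3_rels \<Longrightarrow> ev FP fphi r = \<one>\<^bsub>FP\<^esub>"
proof -
  assume "r \<in> PV3_rels"
  then obtain i j k where r: "r = [((k, i), True), ((k, j), True), ((i, j), True),
                ((k, i), False), ((k, j), False), ((i, j), False)]"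
    and c: "{i, j, k} = {1, 2, 3}" "i \<noteq> j" "j \<noteq> k" "i \<noteq> k"
    unfolding PV3_rels_def by blast
  show ?thesis unfolding r
    by (simp only: ev.simps if_True if_False) (rule F.rel_to[OF fphi_c fphi_c fphi_c fphi_rel[OF c]])
qed

definition "phi = lift FP fphi PV3_rels"

lemma phi_hom: "phi \<in> hom PV3 FP"
  unfolding phi_def PV3_def by (rule F.lift_hom[OF fphi_c fphi_R])

lemma phi_class: "phi (word_class PV3_rels w) = ev FP fphi w"
  unfolding phi_def by (rule F.lift_class[OF fphi_c fphi_R])

lemma gh_phi: "group_hom PV3 FP phi"
  by (simp add: group_hom_def group_hom_axioms_def group_FP group_PV3 phi_hom)

lemma phi_gP: "phi (gP s) = fphi s"
  by (simp add: gP_def phi_class fphi_c)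

lemma phi_mult: "x \<in> carrier PV3 \<Longrightarrow> y \<in> carrier PV3 \<Longrightarrow> phi (x \<otimes>\<^bsub>PV3\<^esub> y) = phi x \<otimes>\<^bsub>FP\<^esub> phi y"
  using phi_hom by (simp add: hom_mult)
lemma phi_inv: "x \<in> carrier PV3 \<Longrightarrow> phi (inv\<^bsub>PV3\<^esub> x) = inv\<^bsub>FP\<^esub> phi x"
  by (rule group_hom.hom_inv[OF gh_phi])

lemma phi_ha: "phi ha = iota ha"
proof -
  have "phi ha = inv\<^bsub>FP\<^esub> (fphi (2,3)) \<otimes>\<^bsub>FP\<^esub> fphi (1,2)"
    unfolding ha_def by (simp add: phi_mult phi_inv phi_gP)
  then show ?thesis by (simp add: fphi_vals F.cancel1)
qed
lemma phi_hA: "phi hA = iota hA"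
proof -
  have "phi hA = fphi (2,1) \<otimes>\<^bsub>FP\<^esub> fphi (2,3)"
    unfolding hA_def by (simp add: phi_mult phi_inv phi_gP)
  then show ?thesis by (simp add: fphi_vals F.m_assoc)
qed
lemma phi_hb: "phi hb = iota hb"
proof -
  have "phi hb = fphi (1,3) \<otimes>\<^bsub>FP\<^esub> fphi (2,3)"
    unfolding hb_def by (simp add: phi_mult phi_inv phi_gP)
  then show ?thesis by (simp add: fphi_vals F.m_assoc)
qed
lemma phi_hB: "phi hB = iota hB"
proof -
  have "phi hB = inv\<^bsub>FP\<^esub> (fphi (2,3)) \<otimes>\<^bsub>FP\<^esub> fphi (3,1)"
    unfolding hB_def by (simp add: phi_mult phi_inv phi_gP)
  then show ?thesis by (simp add: fphi_vals F.cancel1)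
qed
lemma phi_hC: "phi hC = iota hC"
proof -
  have "phi hC = fphi (3,2) \<otimes>\<^bsub>FP\<^esub> fphi (2,3)"
    unfolding hC_def by (simp add: phi_mult phi_inv phi_gP)
  then show ?thesis by (simp add: fphi_vals F.m_assoc)
qed

lemma phi_T: "h \<in> T3 \<Longrightarrow> phi h = iota h"
  unfolding T3_def using phi_ha phi_hA phi_hb phi_hB phi_hC by blast

lemma phi_H: "g \<in> H3 \<Longrightarrow> phi g = iota g"
  unfolding H3_def
proof (induction rule: generate.induct)
  case one
  then show ?case using group_hom.hom_one[OF gh_phi] iota_one by simp
next
  case (incl h) then show ?case by (rule phi_T)
next
  case (inv h)
  then have "h \<in> H3" "h \<in> carrier PV3" using T3_sub by (auto simp: H3_def intro: generate.incl)
  then show ?case using inv phi_inv phi_T iota_inv by simp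
next
  case (eng h1 h2)
  then have "h1 \<in> H3" "h2 \<in> H3" by (simp_all add: H3_def)
  then show ?case using eng phi_mult H3_carr iota_mult by (simp add: H3_def)
qed

definition fpsi :: "(nat \<times> nat) word set + int \<Rightarrow> (nat \<times> nat) word set" where
  "fpsi t = (case t of Inl g \<Rightarrow> (if g \<in> H3 then g else \<one>\<^bsub>PV3\<^esub>) | Inr n \<Rightarrow> gP (2,3) [^]\<^bsub>PV3\<^esub> n)"

lemma fpsi_c: "fpsi t \<in> carrier PV3"
  by (cases t) (auto simp: fpsi_def H3_carr)

lemma fpsi_R: "r \<in> RF \<Longrightarrow> ev PV3 fpsi r = \<one>\<^bsub>PV3\<^esub>"
proof -
  assume "r \<in> RF"
  then consider g h where "r = [(Inl g, True), (Inl h, True), (Inl (g \<otimes>\<^bsub>PV3\<^esub> h), False)]" "g \<in> H3" "h \<in> H3"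
    | g h where "r = [(Inr g, True), (Inr h, True), (Inr (g + h), False)]"
    unfolding RF_def by blast
  then show ?thesis
  proof cases
    case 1
    then have "g \<in> carrier PV3" "h \<in> carrier PV3" by (simp_all add: H3_carr)
    then show ?thesis using 1 by (simp add: fpsi_def P.m_assoc[symmetric])
  next
    case 2
    let ?c = "gP (2,3)"
    have "?c [^]\<^bsub>PV3\<^esub> (g + h) = ?c [^]\<^bsub>PV3\<^esub> g \<otimes>\<^bsub>PV3\<^esub> ?c [^]\<^bsub>PV3\<^esub> h"
      by (simp add: P.int_pow_mult)
    then show ?thesis using 2 by (simp add: fpsi_def P.m_assoc[symmetric])
  qed
qed

definition "psi = lift PV3 fpsi RF"

lemma psi_hom: "psi \<in> hom FP PV3"
  unfolding psi_def FP_def by (rule P.lift_hom[OF fpsi_c fpsi_R])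

lemma psi_class: "psi (word_class RF w) = ev PV3 fpsi w"
  unfolding psi_def by (rule P.lift_class[OF fpsi_c fpsi_R])

lemma gh_psi: "group_hom FP PV3 psi"
  by (simp add: group_hom_def group_hom_axioms_def group_FP group_PV3 psi_hom)

lemma psi_iota: "g \<in> H3 \<Longrightarrow> psi (iota g) = g"
  by (simp add: iota_def psi_class fpsi_def H3_carr)
lemma psi_zeta: "psi (zeta n) = gP (2,3) [^]\<^bsub>PV3\<^esub> n"
  by (simp add: zeta_def psi_class fpsi_def)

lemma psi_mult: "x \<in> carrier FP \<Longrightarrow> y \<in> carrier FP \<Longrightarrow> psi (x \<otimes>\<^bsub>FP\<^esub> y) = psi x \<otimes>\<^bsub>PV3\<^esub> psi y"
  using psi_hom by (simp add: hom_mult)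
lemma psi_inv: "x \<in> carrier FP \<Longrightarrow> psi (inv\<^bsub>FP\<^esub> x) = inv\<^bsub>PV3\<^esub> psi x"
  by (rule group_hom.hom_inv[OF gh_psi])

lemma psi_fphi: "s \<in> PV3_gens \<Longrightarrow> psi (fphi s) = gP s"
proof -
  have z: "psi z = gP (2,3)" by (simp add: psi_zeta)
  have iz: "psi (inv\<^bsub>FP\<^esub> z) = inv\<^bsub>PV3\<^esub> gP (2,3)" by (simp add: psi_inv z)
  assume "s \<in> PV3_gens"
  then have "s = (1,2) \<or> s = (2,1) \<or> s = (1,3) \<or> s = (3,1) \<or> s = (2,3) \<or> s = (3,2)"
    unfolding PV3_gens_def by auto
  moreover have "psi (fphi (1,2)) = gP (1,2)"
    by (simp add: fphi_vals psi_mult z psi_iota) (simp add: ha_def P.cancel2)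
  moreover have "psi (fphi (2,1)) = gP (2,1)"
    by (simp add: fphi_vals psi_mult iz psi_iota) (simp add: hA_def P.m_assoc)
  moreover have "psi (fphi (1,3)) = gP (1,3)"
    by (simp add: fphi_vals psi_mult iz psi_iota) (simp add: hb_def P.m_assoc)
  moreover have "psi (fphi (3,1)) = gP (3,1)"
    by (simp add: fphi_vals psi_mult z psi_iota) (simp add: hB_def P.cancel2)
  moreover have "psi (fphi (2,3)) = gP (2,3)"
    by (simp add: fphi_vals z)
  moreover have "psi (fphi (3,2)) = gP (3,2)"
    by (simp add: fphi_vals psi_mult iz psi_iota) (simp add: hC_def P.m_assoc)
  ultimately show ?thesis by blast
qed

lemma psi_phi: "x \<in> carrier PV3 \<Longrightarrow> psi (phi x) = x"
proof -
  assume "x \<in> carrier PV3"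
  then obtain w where w: "w \<in> lists (PV3_gens \<times> UNIV)" "x = word_class PV3_rels w"
    by (auto simp: PV3_def carrier_pg)
  have "psi (phi x) = ev PV3 (psi \<circ> fphi) w"
    using w hom_ev[OF group_FP group_PV3 psi_hom fphi_c] by (simp add: phi_class)
  also have "\<dots> = ev PV3 (\<lambda>s. word_class PV3_rels [(s, True)]) w"
    using w by (intro ev_cong) (auto simp: psi_fphi gP_def)
  also have "\<dots> = x" using w ev_gens[OF w(1), of PV3_rels] by (simp add: PV3_def)
  finally show ?thesis .
qed

lemma phi_fpsi: "t \<in> SF \<Longrightarrow> phi (fpsi t) = word_class RF [(t, True)]"
proof -
  assume "t \<in> SF"
  then consider g where "t = Inl g" "g \<in> H3" | n where "t = Inr n" by (auto simp: SF_def)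
  then show ?thesis
  proof cases
    case 1 then show ?thesis by (simp add: fpsi_def phi_H iota_def)
  next
    case 2
    have "phi (fpsi t) = phi (gP (2,3)) [^]\<^bsub>FP\<^esub> n"
      using 2 group_hom.hom_int_pow[OF gh_phi] by (simp add: fpsi_def)
    also have "\<dots> = zeta n" by (simp add: phi_gP fphi_vals zeta_pow[symmetric])
    finally show ?thesis using 2 by (simp add: zeta_def)
  qed
qed

lemma phi_psi: "y \<in> carrier FP \<Longrightarrow> phi (psi y) = y"
proof -
  assume "y \<in> carrier FP"
  then obtain w where w: "w \<in> lists (SF \<times> UNIV)" "y = word_class RF w"
    by (auto simp: FP_def carrier_pg)
  have "phi (psi y) = ev FP (phi \<circ> fpsi) w"
    using w hom_ev[OF group_PV3 group_FP phi_hom fpsi_c] by (simp add: psi_class)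
  also have "\<dots> = ev FP (\<lambda>s. word_class RF [(s, True)]) w"
    using w by (intro ev_cong) (auto simp: phi_fpsi)
  also have "\<dots> = y" using w ev_gens[OF w(1), of RF] by (simp add: FP_def)
  finally show ?thesis .
qed

theorem proposition2p1:
  shows "\<exists>G3 :: ((nat \<times> nat) word set) monoid.
           group G3 \<and> PV3 \<cong> (G3 \<star> integer_group)"
proof (intro exI conjI)
  show "group G3" by (rule group_G3)
  have "phi \<in> iso PV3 FP"
  proof (rule isoI[OF phi_hom])
    show "bij_betw phi (carrier PV3) (carrier FP)"
    proof (rule bij_betw_byWitness[where f' = psi])
      show "\<forall>a\<in>carrier PV3. psi (phi a) = a" using psi_phi by blast
      show "\<forall>a\<in>carrier FP. phi (psi a) = a" using phi_psi by blast
      show "phi ` carrier PV3 \<subseteq> carrier FP" using phi_hom by (auto simp: hom_def)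
      show "psi ` carrier FP \<subseteq> carrier PV3" using psi_hom by (auto simp: hom_def)
    qed
  qed
  then show "PV3 \<cong> G3 \<star> integer_group" unfolding F_eq by (rule is_isoI)
qed

end
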